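(* Let $G$ be a finite abelian group and $G_0\subseteq G$. Then $c(\mathcal{B}(G_0))\le\dfrac{2\,\mathsf{d}(G_0)+2}{\min\{|\alpha|:\alpha\in\mathcal{A}(\mathcal{B}(G_0))\}}$.
   Context: $G$ is written multiplicatively. $\mathcal{B}(G_0)=\{\alpha\in\mathbb{N}_0^{G_0}\mid\prod_{g\in G_0}g^{\alpha(g)}=1\}$, a reduced affine submonoid of $(\mathbb{N}_0^{G_0},+)$ with finite atom set $\mathcal{A}(\mathcal{B}(G_0))$; $|\alpha|=\sum_g\alpha(g)$. Catenary degree: for $\beta,\gamma\in\mathbb{N}_0^{\mathcal{A}}$ ($\mathcal{A}=\mathcal{A}(\mathcal{B}(G_0))$) let $a^{\beta}=\sum_a\beta(a)a$, $\|\beta\|=\sum_a\beta(a)$, $\gcd(\beta,\gamma)(a)=\min\{\beta(a),\gamma(a)\}$, $d(\beta,\gamma)=\max\{\|\beta-\gcd\|,\|\gamma-\gcd\|\}$; $c(\mathcal{B}(G_0))$ is the minimal non-negative $d$ such that whenever $a^{\beta}=a^{\gamma}$ there is a chain $\beta=\beta^{(0)},\dots,\beta^{(k)}=\gamma$ with $a^{\beta^{(j)}}=a^{\beta^{(j+1)}}$ and $d(\beta^{(j)},\beta^{(j+1)})\le d$. $\mathsf{d}(G_0)$ is the maximal length of a sequence over $G_0$ containing no nonempty product-one subsequence. *)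

theory Defs
  imports "HOL-Algebra.Algebra"
begin

text \<open>Elements of the ambient free monoid N_0^{G_0}: functions 'a => nat vanishing off G_0.\<close>
definition supp_in :: "'a set \<Rightarrow> ('a \<Rightarrow> nat) \<Rightarrow> bool" where
  "supp_in G0 \<alpha> \<longleftrightarrow> (\<forall>g. g \<notin> G0 \<longrightarrow> \<alpha> g = 0)"

definition seq_prod :: "('a, 'b) monoid_scheme \<Rightarrow> 'a set \<Rightarrow> ('a \<Rightarrow> nat) \<Rightarrow> 'a" where
  "seq_prod G G0 \<alpha> = finprod G (\<lambda>g. g [^]\<^bsub>G\<^esub> \<alpha> g) G0"

definition seq_len :: "'a set \<Rightarrow> ('a \<Rightarrow> nat) \<Rightarrow> nat" where
  "seq_len G0 \<alpha> = (\<Sum>g\<in>G0. \<alpha> g)"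

definition BG0 :: "('a, 'b) monoid_scheme \<Rightarrow> 'a set \<Rightarrow> ('a \<Rightarrow> nat) set" where
  "BG0 G G0 = {\<alpha>. supp_in G0 \<alpha> \<and> seq_prod G G0 \<alpha> = \<one>\<^bsub>G\<^esub>}"

definition atoms :: "('a, 'b) monoid_scheme \<Rightarrow> 'a set \<Rightarrow> ('a \<Rightarrow> nat) set" where
  "atoms G G0 = {\<alpha> \<in> BG0 G G0. \<alpha> \<noteq> (\<lambda>_. 0) \<and>
      (\<forall>\<beta>\<in>BG0 G G0. \<forall>\<gamma>\<in>BG0 G G0. \<alpha> = (\<lambda>g. \<beta> g + \<gamma> g) \<longrightarrow>
          \<beta> = (\<lambda>_. 0) \<or> \<gamma> = (\<lambda>_. 0))}"

text \<open>Factorizations: elements of N_0^A, i.e. functions on atoms vanishing off the atom set.\<close>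
definition factorizations :: "('a, 'b) monoid_scheme \<Rightarrow> 'a set \<Rightarrow> (('a \<Rightarrow> nat) \<Rightarrow> nat) set" where
  "factorizations G G0 = {\<beta>. \<forall>a. a \<notin> atoms G G0 \<longrightarrow> \<beta> a = 0}"

definition fact_eval :: "('a, 'b) monoid_scheme \<Rightarrow> 'a set \<Rightarrow> (('a \<Rightarrow> nat) \<Rightarrow> nat) \<Rightarrow> ('a \<Rightarrow> nat)" where
  "fact_eval G G0 \<beta> = (\<lambda>g. \<Sum>a\<in>atoms G G0. \<beta> a * a g)"

definition fact_dist :: "('a, 'b) monoid_scheme \<Rightarrow> 'a set \<Rightarrow> (('a \<Rightarrow> nat) \<Rightarrow> nat) \<Rightarrow> (('a \<Rightarrow> nat) \<Rightarrow> nat) \<Rightarrow> nat" where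
  "fact_dist G G0 \<beta> \<gamma> = max (\<Sum>a\<in>atoms G G0. \<beta> a - min (\<beta> a) (\<gamma> a))
                              (\<Sum>a\<in>atoms G G0. \<gamma> a - min (\<beta> a) (\<gamma> a))"

definition catenary_bound :: "('a, 'b) monoid_scheme \<Rightarrow> 'a set \<Rightarrow> nat \<Rightarrow> bool" where
  "catenary_bound G G0 d \<longleftrightarrow>
     (\<forall>\<beta>\<in>factorizations G G0. \<forall>\<gamma>\<in>factorizations G G0.
        fact_eval G G0 \<beta> = fact_eval G G0 \<gamma> \<longrightarrow>
        (\<exists>xs. xs \<noteq> [] \<and> hd xs = \<beta> \<and> last xs = \<gamma> \<and>
              (\<forall>x\<in>set xs. x \<in> factorizations G G0 \<and> fact_eval G G0 x = fact_eval G G0 \<beta>) \<and>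
              (\<forall>j. Suc j < length xs \<longrightarrow> fact_dist G G0 (xs ! j) (xs ! Suc j) \<le> d)))"

definition catenary_degree :: "('a, 'b) monoid_scheme \<Rightarrow> 'a set \<Rightarrow> nat" where
  "catenary_degree G G0 = (LEAST d. catenary_bound G G0 d)"

definition product_one_free :: "('a, 'b) monoid_scheme \<Rightarrow> 'a set \<Rightarrow> ('a \<Rightarrow> nat) \<Rightarrow> bool" where
  "product_one_free G G0 \<alpha> \<longleftrightarrow>
     (\<forall>\<beta>. (\<forall>g. \<beta> g \<le> \<alpha> g) \<and> \<beta> \<noteq> (\<lambda>_. 0) \<longrightarrow> seq_prod G G0 \<beta> \<noteq> \<one>\<^bsub>G\<^esub>)"

definition davenport :: "('a, 'b) monoid_scheme \<Rightarrow> 'a set \<Rightarrow> nat" where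
  "davenport G G0 = Max {seq_len G0 \<alpha> | \<alpha>. supp_in G0 \<alpha> \<and> product_one_free G G0 \<alpha>}"

end

theory Submission
  imports Defs
begin

locale bctx =
  fixes G :: "('a, 'b) monoid_scheme" and G0 :: "'a set"
  assumes cg: "comm_group G" and finG: "finite (carrier G)" and sub: "G0 \<subseteq> carrier G"
begin

lemma finG0: "finite G0" using finG sub finite_subset by blast

interpretation C: comm_group G by (rule cg)

lemma pow_in: "(\<lambda>g. g [^]\<^bsub>G\<^esub> (f g :: nat)) \<in> G0 \<rightarrow> carrier G"
  using sub by auto

lemma sp_closed: "seq_prod G G0 f \<in> carrier G"
  unfolding seq_prod_def by (rule C.finprod_closed[OF pow_in])

lemma sp_add: "seq_prod G G0 (\<lambda>k. f k + g k) = seq_prod G G0 f \<otimes>\<^bsub>G\<^esub> seq_prod G G0 g"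
proof -
  have "seq_prod G G0 (\<lambda>k. f k + g k) = finprod G (\<lambda>k. k [^]\<^bsub>G\<^esub> f k \<otimes>\<^bsub>G\<^esub> k [^]\<^bsub>G\<^esub> g k) G0"
    unfolding seq_prod_def
    by (rule C.finprod_cong') (use sub in \<open>auto simp: C.nat_pow_mult\<close>)
  also have "\<dots> = seq_prod G G0 f \<otimes>\<^bsub>G\<^esub> seq_prod G G0 g"
    unfolding seq_prod_def by (rule C.finprod_multf[OF pow_in pow_in])
  finally show ?thesis .
qed

lemma sp_zero: "seq_prod G G0 (\<lambda>_. 0) = \<one>\<^bsub>G\<^esub>"
  unfolding seq_prod_def by simp

abbreviation "H \<equiv> BG0 G G0"
abbreviation "A \<equiv> atoms G G0"
abbreviation "len \<equiv> seq_len G0"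

lemma H_zero: "(\<lambda>_. 0) \<in> H"
  by (simp add: BG0_def supp_in_def sp_zero)

lemma H_add: "f \<in> H \<Longrightarrow> g \<in> H \<Longrightarrow> (\<lambda>k. f k + g k) \<in> H"
  by (auto simp: BG0_def supp_in_def sp_add)

lemma H_sub: assumes "f \<in> H" "g \<in> H" "\<forall>k. g k \<le> f k" shows "(\<lambda>k. f k - g k) \<in> H"
proof -
  have e: "f = (\<lambda>k. (f k - g k) + g k)" using assms(3) by auto
  have "seq_prod G G0 f = seq_prod G G0 (\<lambda>k. f k - g k) \<otimes>\<^bsub>G\<^esub> seq_prod G G0 g"
    by (subst e) (rule sp_add)
  then have "seq_prod G G0 (\<lambda>k. f k - g k) = \<one>\<^bsub>G\<^esub>"
    using assms(1,2) sp_closed by (simp add: BG0_def)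
  then show ?thesis using assms(1) by (auto simp: BG0_def supp_in_def)
qed

lemma len_add: "len (\<lambda>k. f k + g k) = len f + len g"
  by (simp add: seq_len_def sum.distrib)

lemma len_sub: "\<forall>k. g k \<le> f k \<Longrightarrow> len (\<lambda>k. f k - g k) = len f - len g"
  by (simp add: seq_len_def sum_subtractf_nat)

lemma len_mono: "\<forall>k. g k \<le> f k \<Longrightarrow> len g \<le> len f"
  by (simp add: seq_len_def sum_mono)

lemma len_pos: "supp_in G0 f \<Longrightarrow> f \<noteq> (\<lambda>_. 0) \<Longrightarrow> 0 < len f"
proof -
  assume s: "supp_in G0 f" and n: "f \<noteq> (\<lambda>_. 0)"
  then obtain g where "f g \<noteq> 0" by auto
  with s have "g \<in> G0" by (auto simp: supp_in_def)
  then show "0 < len f" unfolding seq_len_def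
    using \<open>f g \<noteq> 0\<close> finG0 by (metis gr0I sum_eq_0_iff)
qed

lemma len_strict: assumes "\<forall>k. g k \<le> f k" "g h < f h" "h \<in> G0" shows "len g < len f"
  unfolding seq_len_def using assms finG0 by (meson sum_strict_mono_ex1)

end

context bctx
begin
interpretation C: comm_group G by (rule cg)

abbreviation "dav \<equiv> davenport G G0"

lemma atomD: "a \<in> A \<Longrightarrow> a \<in> H \<and> a \<noteq> (\<lambda>_. 0)"
  by (simp add: atoms_def)

lemma atom_supp: "a \<in> A \<Longrightarrow> supp_in G0 a"
  by (simp add: atoms_def BG0_def)

lemma atom_le: assumes "a \<in> A" "b \<in> H" "\<forall>k. b k \<le> a k" "b \<noteq> (\<lambda>_. 0)" shows "b = a"
proof -
  have aH: "a \<in> H" using assms(1) by (simp add: atoms_def)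
  have d: "(\<lambda>k. a k - b k) \<in> H" by (rule H_sub[OF aH assms(2,3)])
  have e: "a = (\<lambda>k. b k + (a k - b k))" using assms(3) by auto
  have "\<forall>\<beta>\<in>H. \<forall>\<gamma>\<in>H. a = (\<lambda>g. \<beta> g + \<gamma> g) \<longrightarrow> \<beta> = (\<lambda>_. 0) \<or> \<gamma> = (\<lambda>_. 0)"
    using assms(1) by (simp add: atoms_def)
  from this[rule_format, OF assms(2) d] e
  have "b = (\<lambda>_. 0) \<or> (\<lambda>k. a k - b k) = (\<lambda>_. 0)" by simp
  then have "(\<lambda>k. a k - b k) = (\<lambda>_. 0)" using assms(4) by blast
  note h = this
  show ?thesis
  proof (rule ext)
    fix k
    have "a k - b k = 0" using fun_cong[OF h, of k] by simp
    with spec[OF assms(3), of k] show "b k = a k" by simp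
  qed
qed

lemma below_atom: "f \<in> H \<Longrightarrow> f \<noteq> (\<lambda>_. 0) \<Longrightarrow> \<exists>a\<in>A. \<forall>k. a k \<le> f k"
proof (induction "len f" arbitrary: f rule: less_induct)
  case less
  show ?case
  proof (cases "f \<in> A")
    case True then show ?thesis by auto
  next
    case False
    then obtain b c where bc: "b \<in> H" "c \<in> H" "f = (\<lambda>g. b g + c g)" "b \<noteq> (\<lambda>_. 0)" "c \<noteq> (\<lambda>_. 0)"
      using less.prems unfolding atoms_def by blast
    have "0 < len c" using bc(2,5) len_pos by (simp add: BG0_def)
    then have "len b < len f" using bc(3) len_add by simp
    then obtain a where "a \<in> A" "\<forall>k. a k \<le> b k" using less.hyps bc(1,4) by blast
    moreover have "\<forall>k. b k \<le> f k" using bc(3) by simp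
    ultimately show ?thesis by (meson le_trans)
  qed
qed

lemma zsf_bound_each: assumes "supp_in G0 f" "product_one_free G G0 f" "g \<in> G0"
  shows "f g < order G"
proof (rule ccontr)
  assume "\<not> f g < order G"
  define b where "b = (\<lambda>k. if k = g then order G else 0)"
  have op: "0 < order G" using finG by (simp add: C.order_gt_0_iff_finite)
  have le: "\<forall>k. b k \<le> f k" using \<open>\<not> f g < order G\<close> by (auto simp: b_def)
  have nz: "b \<noteq> (\<lambda>_. 0)" using op by (auto simp: b_def fun_eq_iff)
  have gc: "g \<in> carrier G" using assms(3) sub by auto
  have "seq_prod G G0 b = finprod G (\<lambda>k. if k = g then g [^]\<^bsub>G\<^esub> order G else \<one>\<^bsub>G\<^esub>) G0"
    unfolding seq_prod_def b_def
    by (rule C.finprod_cong') (use gc in auto)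
  also have "\<dots> = \<one>\<^bsub>G\<^esub>" by (rule C.finprod_one_eqI) (simp add: C.pow_order_eq_1[OF gc])
  finally show False using assms(2) le nz unfolding product_one_free_def by blast
qed

lemma zsf_bound: assumes "supp_in G0 f" "product_one_free G G0 f"
  shows "len f \<le> card G0 * order G"
proof -
  have "len f \<le> (\<Sum>g\<in>G0. order G)" unfolding seq_len_def
    using zsf_bound_each[OF assms] by (intro sum_mono) (simp add: less_imp_le)
  then show ?thesis by simp
qed

lemma dav_ge: assumes "supp_in G0 f" "product_one_free G G0 f" shows "len f \<le> dav"
proof -
  let ?S = "{seq_len G0 \<alpha> | \<alpha>. supp_in G0 \<alpha> \<and> product_one_free G G0 \<alpha>}"
  have "?S \<subseteq> {..card G0 * order G}"
  proof (rule subsetI)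
    fix n assume "n \<in> ?S"
    then obtain \<alpha> where "n = len \<alpha>" "supp_in G0 \<alpha>" "product_one_free G G0 \<alpha>" by blast
    then show "n \<in> {..card G0 * order G}" using zsf_bound by simp
  qed
  then have "finite ?S" by (rule finite_subset) simp
  moreover have "len f \<in> ?S" using assms by blast
  ultimately show ?thesis unfolding davenport_def by (rule Max_ge)
qed

lemma dav_prop: assumes "supp_in G0 s" "dav < len s"
  shows "\<exists>b. (\<forall>k. b k \<le> s k) \<and> b \<noteq> (\<lambda>_. 0) \<and> b \<in> H"
proof -
  have "\<not> product_one_free G G0 s"
  proof
    assume "product_one_free G G0 s"
    from dav_ge[OF assms(1) this] assms(2) show False by simp
  qed
  then obtain b where b: "\<forall>g. b g \<le> s g" "b \<noteq> (\<lambda>_. 0)" "seq_prod G G0 b = \<one>\<^bsub>G\<^esub>"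
    unfolding product_one_free_def by blast
  have "supp_in G0 b" using assms(1) b(1) unfolding supp_in_def by (metis le_zero_eq)
  then show ?thesis using b by (auto simp: BG0_def)
qed

lemma atom_len: assumes "a \<in> A" shows "len a \<le> dav + 1"
proof (rule ccontr)
  assume "\<not> len a \<le> dav + 1"
  have sa: "supp_in G0 a" using atom_supp[OF assms] .
  have "a \<noteq> (\<lambda>_. 0)" using atomD[OF assms] by simp
  then obtain g where g: "a g \<noteq> 0" by auto
  then have gG: "g \<in> G0" using sa by (auto simp: supp_in_def)
  define s where "s = (\<lambda>k. a k - (if k = g then 1 else 0))"
  have sle: "\<forall>k. (if k = g then 1 else 0) \<le> a k" using g by auto
  have "len (\<lambda>k. if k = g then 1 else 0::nat) = 1" unfolding seq_len_def using gG finG0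
    by (simp add: sum.delta)
  then have ls: "len s = len a - 1" unfolding s_def using len_sub[OF sle] by simp
  have ss: "supp_in G0 s" using sa gG unfolding s_def supp_in_def by auto
  have "dav < len s" using ls \<open>\<not> len a \<le> dav + 1\<close> by simp
  then obtain b where b: "\<forall>k. b k \<le> s k" "b \<noteq> (\<lambda>_. 0)" "b \<in> H"
    using dav_prop[OF ss] by blast
  have "\<forall>k. b k \<le> a k"
  proof
    fix k show "b k \<le> a k" using spec[OF b(1), of k] unfolding s_def by (meson diff_le_self le_trans)
  qed
  then have "b = a" using atom_le[OF assms b(3) _ b(2)] by blast
  moreover have "b g \<le> a g - 1" using spec[OF b(1), of g] by (simp add: s_def)
  ultimately show False using g by simp
qed

lemma finA: "finite A"
proof -
  have "A \<subseteq> {f. \<forall>x. (x \<in> G0 \<longrightarrow> f x \<in> {..dav+1}) \<and> (x \<notin> G0 \<longrightarrow> f x = 0)}"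
  proof
    fix a assume a: "a \<in> A"
    have m: "\<forall>x\<in>G0. a x \<le> len a" unfolding seq_len_def
      by (intro ballI member_le_sum finG0) auto
    have "\<forall>x. (x \<in> G0 \<longrightarrow> a x \<in> {..dav+1}) \<and> (x \<notin> G0 \<longrightarrow> a x = 0)"
    proof (intro allI conjI impI)
      fix x assume "x \<in> G0"
      then have "a x \<le> len a" using m by blast
      with atom_len[OF a] show "a x \<in> {..dav+1}" by simp
    next
      fix x assume "x \<notin> G0"
      then show "a x = 0" using atom_supp[OF a] by (simp add: supp_in_def)
    qed
    then show "a \<in> {f. \<forall>x. (x \<in> G0 \<longrightarrow> f x \<in> {..dav+1}) \<and> (x \<notin> G0 \<longrightarrow> f x = 0)}"
      by simp
  qed
  then show ?thesis by (rule finite_subset) (intro finite_set_of_finite_funs finG0 finite_atMost)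
qed

end

context bctx
begin

definition compat :: "('a \<Rightarrow> nat) \<Rightarrow> ('a \<Rightarrow> nat) \<Rightarrow> ('a \<Rightarrow> nat) \<Rightarrow> bool" where
  "compat x a b \<longleftrightarrow> a \<in> A \<and> b \<in> A \<and> (\<forall>k. a k + b k \<le> x k)"

lemma H_supp: "f \<in> H \<Longrightarrow> supp_in G0 f" by (simp add: BG0_def)

lemma le_supp: "supp_in G0 f \<Longrightarrow> \<forall>k. g k \<le> f k \<Longrightarrow> supp_in G0 g"
  unfolding supp_in_def by (metis le_zero_eq)

lemma atom_neq_le: assumes "a \<in> A" "b \<in> A" "a \<noteq> b" shows "\<exists>g. b g < a g"
proof (rule ccontr)
  assume "\<not> (\<exists>g. b g < a g)"
  then have "\<forall>k. a k \<le> b k" by (simp add: not_less)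
  then have "a = b" using atom_le[OF assms(2)] atomD[OF assms(1)] by blast
  with assms(3) show False by simp
qed

lemma connect:
  assumes xH: "x \<in> H" and big: "2 * dav + 2 < len x"
  shows "\<forall>a b. len (\<lambda>k. max (a k) (b k)) = n \<longrightarrow> a \<in> A \<longrightarrow> b \<in> A \<longrightarrow>
           (\<forall>k. a k \<le> x k) \<longrightarrow> (\<forall>k. b k \<le> x k) \<longrightarrow> (compat x)\<^sup>*\<^sup>* a b"
proof (induction n rule: less_induct)
  case (less n)
  show ?case
  proof (intro allI impI)
    fix a b
    assume n: "len (\<lambda>k. max (a k) (b k)) = n" and aA: "a \<in> A" and bA: "b \<in> A"
      and ax: "\<forall>k. a k \<le> x k" and bx: "\<forall>k. b k \<le> x k"
    show "(compat x)\<^sup>*\<^sup>* a b"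
    proof (rule ccontr)
      assume nc: "\<not> (compat x)\<^sup>*\<^sup>* a b"
      define j where "j = (\<lambda>k. max (a k) (b k))"
      define z where "z = (\<lambda>k. x k - j k)"
      have jx: "\<forall>k. j k \<le> x k" using ax bx by (simp add: j_def)
      have xs: "supp_in G0 x" using H_supp[OF xH] .
      have zs: "supp_in G0 z" using le_supp[OF xs] unfolding z_def by simp
      have zpof: "product_one_free G G0 z"
        unfolding product_one_free_def
      proof (intro allI impI)
        fix \<beta> assume h: "(\<forall>g. \<beta> g \<le> z g) \<and> \<beta> \<noteq> (\<lambda>_. 0)"
        show "seq_prod G G0 \<beta> \<noteq> \<one>\<^bsub>G\<^esub>"
        proof
          assume p1: "seq_prod G G0 \<beta> = \<one>\<^bsub>G\<^esub>"
          have "supp_in G0 \<beta>" using le_supp[OF zs] h by blast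
          then have "\<beta> \<in> H" using p1 by (simp add: BG0_def)
          then obtain w where wA: "w \<in> A" and wb: "\<forall>k. w k \<le> \<beta> k" using below_atom h by blast
          have wz: "\<forall>k. w k \<le> z k" using wb h by (meson le_trans)
          have c1: "compat x a w" unfolding compat_def
          proof (intro conjI aA wA allI)
            fix k show "a k + w k \<le> x k"
              using spec[OF wz, of k] spec[OF jx, of k] unfolding z_def j_def by linarith
          qed
          have c2: "compat x w b" unfolding compat_def
          proof (intro conjI bA wA allI)
            fix k show "w k + b k \<le> x k"
              using spec[OF wz, of k] spec[OF jx, of k] unfolding z_def j_def by linarith
          qed
          have "(compat x)\<^sup>*\<^sup>* a b"
            using r_into_rtranclp[of "compat x", OF c1] c2 by (meson rtranclp.rtrancl_into_rtrancl)
          with nc show False by simp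
        qed
      qed
      have lz: "len z \<le> dav" by (rule dav_ge[OF zs zpof])
      have "len z = len x - len j" unfolding z_def by (rule len_sub[OF jx])
      moreover have "len j \<le> len x" by (rule len_mono[OF jx])
      ultimately have lj: "dav + 2 < len j" using lz big by linarith
      have ab: "a \<noteq> b" using nc by auto
      obtain g where g: "b g < a g" using atom_neq_le[OF aA bA ab] by blast
      obtain h where h: "a h < b h" using atom_neq_le[OF bA aA] ab by metis
      have gG: "g \<in> G0" using atom_supp[OF aA] g unfolding supp_in_def by (metis not_less0)
      have hG: "h \<in> G0" using atom_supp[OF bA] h unfolding supp_in_def by (metis not_less0)
      have gh: "g \<noteq> h" using g h by auto
      define e :: "'a \<Rightarrow> nat" where "e = (\<lambda>k. (if k = g then 1 else 0) + (if k = h then 1 else 0))"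
      define s where "s = (\<lambda>k. j k - e k)"
      have ej: "\<forall>k. e k \<le> j k" using g h gh by (auto simp: e_def j_def)
      have le: "len e = 2" unfolding e_def seq_len_def using gG hG gh finG0
        by (simp add: sum.distrib)
      have ls: "len s = len j - 2" unfolding s_def using len_sub[OF ej] le by simp
      have js: "supp_in G0 j" using atom_supp[OF aA] atom_supp[OF bA]
        unfolding supp_in_def j_def by simp
      have ss: "supp_in G0 s" using js unfolding supp_in_def s_def by simp
      have "dav < len s" using ls lj by simp
      then obtain \<beta> where \<beta>: "\<forall>k. \<beta> k \<le> s k" "\<beta> \<noteq> (\<lambda>_. 0)" "\<beta> \<in> H"
        using dav_prop[OF ss] by blast
      obtain c where cA: "c \<in> A" and cb: "\<forall>k. c k \<le> \<beta> k" using below_atom \<beta>(3,2) by blast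
      have cs: "\<forall>k. c k \<le> s k" using cb \<beta>(1) by (meson le_trans)
      have cj: "\<forall>k. c k \<le> j k" using cs unfolding s_def by (meson diff_le_self le_trans)
      have cx: "\<forall>k. c k \<le> x k" using cj jx by (meson le_trans)
      have cg: "c g < a g" using spec[OF cs, of g] g gh unfolding s_def e_def j_def by simp
      have ch: "c h < b h" using spec[OF cs, of h] h gh unfolding s_def e_def j_def by simp
      show False
      proof (cases "(compat x)\<^sup>*\<^sup>* a c")
        case True
        have "len (\<lambda>k. max (c k) (b k)) < len j"
        proof (rule len_strict[OF _ _ gG])
          show "\<forall>k. max (c k) (b k) \<le> j k" using cj unfolding j_def by simp
          show "max (c g) (b g) < j g" using cg g unfolding j_def by simp
        qed
        then have "(compat x)\<^sup>*\<^sup>* c b"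
          using less.IH[of "len (\<lambda>k. max (c k) (b k))"] n cA bA cx bx unfolding j_def by blast
        with True nc show False by (meson rtranclp_trans)
      next
        case False
        have "len (\<lambda>k. max (a k) (c k)) < len j"
        proof (rule len_strict[OF _ _ hG])
          show "\<forall>k. max (a k) (c k) \<le> j k" using cj unfolding j_def by simp
          show "max (a h) (c h) < j h" using ch h unfolding j_def by simp
        qed
        then have "(compat x)\<^sup>*\<^sup>* a c"
          using less.IH[of "len (\<lambda>k. max (a k) (c k))"] n cA aA cx ax unfolding j_def by blast
        with False show False by simp
      qed
    qed
  qed
qed

end

context bctx
begin

abbreviation "Fz \<equiv> factorizations G G0"
abbreviation "ev \<equiv> fact_eval G G0"
abbreviation "fd \<equiv> fact_dist G G0"

definition dl :: "('a \<Rightarrow> nat) \<Rightarrow> ('a \<Rightarrow> nat) \<Rightarrow> nat" where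
  "dl c = (\<lambda>a. if a = c then 1 else 0)"

definition flen :: "(('a \<Rightarrow> nat) \<Rightarrow> nat) \<Rightarrow> nat" where
  "flen f = (\<Sum>a\<in>A. f a)"

lemma ev_add: "ev (\<lambda>a. f a + h a) = (\<lambda>k. ev f k + ev h k)"
  unfolding fact_eval_def by (simp add: sum.distrib distrib_right)

lemma ev_dl: assumes "c \<in> A" shows "ev (dl c) = c"
proof
  fix k
  have "ev (dl c) k = (\<Sum>a\<in>A. if a = c then c k else 0)"
    unfolding fact_eval_def dl_def by (rule sum.cong) auto
  also have "\<dots> = c k" using assms finA by (simp add: sum.delta')
  finally show "ev (dl c) k = c k" .
qed

lemma Fz_add: "f \<in> Fz \<Longrightarrow> h \<in> Fz \<Longrightarrow> (\<lambda>a. f a + h a) \<in> Fz"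
  by (simp add: factorizations_def)

lemma Fz_dl: "c \<in> A \<Longrightarrow> dl c \<in> Fz"
  by (auto simp: factorizations_def dl_def)

lemma Fz_A: "f \<in> Fz \<Longrightarrow> 0 < f c \<Longrightarrow> c \<in> A"
  by (auto simp: factorizations_def)

lemma decomp: assumes "f \<in> Fz" "0 < f c"
  shows "f(c := f c - 1) \<in> Fz \<and> f = (\<lambda>a. (f(c := f c - 1)) a + dl c a)"
proof
  show "f(c := f c - 1) \<in> Fz" using assms(1) by (auto simp: factorizations_def)
  show "f = (\<lambda>a. (f(c := f c - 1)) a + dl c a)"
  proof (rule ext)
    fix a show "f a = (f(c := f c - 1)) a + dl c a"
      using assms(2) by (cases "a = c") (simp_all add: dl_def)
  qed
qed

lemma fd_add: "fd (\<lambda>a. f a + h a) (\<lambda>a. g a + h a) = fd f g"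
proof -
  have e1: "\<And>a. f a + h a - min (f a + h a) (g a + h a) = f a - min (f a) (g a)"
    by (simp add: min_def)
  have e2: "\<And>a. g a + h a - min (f a + h a) (g a + h a) = g a - min (f a) (g a)"
    by (simp add: min_def)
  show ?thesis unfolding fact_dist_def e1 e2 ..
qed

lemma fd_le: "fd f g \<le> max (flen f) (flen g)"
proof -
  have "(\<Sum>a\<in>A. f a - min (f a) (g a)) \<le> flen f" unfolding flen_def by (rule sum_mono) simp
  moreover have "(\<Sum>a\<in>A. g a - min (f a) (g a)) \<le> flen g" unfolding flen_def by (rule sum_mono) simp
  ultimately show ?thesis unfolding fact_dist_def by (auto simp: le_max_iff_disj)
qed

lemma ev_len: "len (ev f) = (\<Sum>a\<in>A. f a * len a)"
proof -
  have "len (ev f) = (\<Sum>k\<in>G0. \<Sum>a\<in>A. f a * a k)" unfolding seq_len_def fact_eval_def ..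
  also have "\<dots> = (\<Sum>a\<in>A. \<Sum>k\<in>G0. f a * a k)" by (rule sum.swap)
  also have "\<dots> = (\<Sum>a\<in>A. f a * len a)" unfolding seq_len_def by (simp add: sum_distrib_left)
  finally show ?thesis .
qed

lemma flen_len: assumes "\<forall>a\<in>A. mm \<le> len a" shows "mm * flen f \<le> len (ev f)"
proof -
  have "mm * flen f = (\<Sum>a\<in>A. f a * mm)" unfolding flen_def by (simp add: sum_distrib_left mult.commute)
  also have "\<dots> \<le> (\<Sum>a\<in>A. f a * len a)" using assms by (intro sum_mono) simp
  finally show ?thesis using ev_len by simp
qed

lemma H_mult: "a \<in> H \<Longrightarrow> (\<lambda>k. n * a k) \<in> H"
proof (induction n)
  case 0 then show ?case using H_zero by simp
next
  case (Suc n)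
  have "(\<lambda>k. Suc n * a k) = (\<lambda>k. a k + n * a k)" by simp
  then show ?case using H_add[OF Suc.prems Suc.IH[OF Suc.prems]] by simp
qed

lemma ev_H: assumes "f \<in> Fz" shows "ev f \<in> H"
proof -
  have "S \<subseteq> A \<Longrightarrow> (\<lambda>k. \<Sum>a\<in>S. f a * a k) \<in> H" for S
  proof (induction S rule: infinite_finite_induct)
    case (infinite S) then show ?case using H_zero by simp
  next
    case empty then show ?case using H_zero by simp
  next
    case (insert c S)
    have cH: "c \<in> H" using insert.prems atomD by blast
    have "(\<lambda>k. \<Sum>a\<in>insert c S. f a * a k) = (\<lambda>k. f c * c k + (\<Sum>a\<in>S. f a * a k))"
      using insert.hyps by simp
    then show ?case using H_add[OF H_mult[OF cH] insert.IH] insert.prems by simp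
  qed
  then show ?thesis unfolding fact_eval_def by blast
qed

lemma fact_exists: "y \<in> H \<Longrightarrow> \<exists>f\<in>Fz. ev f = y"
proof (induction "len y" arbitrary: y rule: less_induct)
  case less
  show ?case
  proof (cases "y = (\<lambda>_. 0)")
    case True
    have "(\<lambda>_. 0) \<in> Fz" by (simp add: factorizations_def)
    moreover have "ev (\<lambda>_. 0) = (\<lambda>_. 0)" by (simp add: fact_eval_def)
    ultimately show ?thesis using True by blast
  next
    case nz: False
    show ?thesis
    proof (cases "y \<in> A")
      case True then show ?thesis using ev_dl Fz_dl by blast
    next
      case False
      then obtain b c where bc: "b \<in> H" "c \<in> H" "y = (\<lambda>g. b g + c g)" "b \<noteq> (\<lambda>_. 0)" "c \<noteq> (\<lambda>_. 0)"
        using less.prems nz unfolding atoms_def by blast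
      have "0 < len c" using bc(2,5) len_pos H_supp by blast
      then have lb: "len b < len y" using bc(3) len_add by simp
      have "0 < len b" using bc(1,4) len_pos H_supp by blast
      then have lc: "len c < len y" using bc(3) len_add by simp
      obtain fb where "fb \<in> Fz" "ev fb = b" using less.hyps[OF lb bc(1)] by blast
      moreover obtain fc where "fc \<in> Fz" "ev fc = c" using less.hyps[OF lc bc(2)] by blast
      ultimately show ?thesis using Fz_add ev_add bc(3) by metis
    qed
  qed
qed

lemma atom_le_ev: assumes "f \<in> Fz" "0 < f a" shows "\<forall>k. a k \<le> ev f k"
proof
  fix k
  have aA: "a \<in> A" using Fz_A assms by blast
  have "a k \<le> f a * a k" using assms(2) by simp
  also have "\<dots> \<le> (\<Sum>b\<in>A. f b * b k)" by (rule member_le_sum[OF aA]) (auto simp: finA)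
  finally show "a k \<le> ev f k" unfolding fact_eval_def .
qed

lemma ev_nz: assumes "f \<in> Fz" "0 < len (ev f)" shows "\<exists>a. 0 < f a"
proof (rule ccontr)
  assume "\<not> (\<exists>a. 0 < f a)"
  then have "ev f = (\<lambda>_. 0)" by (simp add: fact_eval_def)
  then show False using assms(2) by (simp add: seq_len_def)
qed

end

context bctx
begin

definition step :: "nat \<Rightarrow> (('a \<Rightarrow> nat) \<Rightarrow> nat) \<Rightarrow> (('a \<Rightarrow> nat) \<Rightarrow> nat) \<Rightarrow> bool" where
  "step N f g \<longleftrightarrow> f \<in> Fz \<and> g \<in> Fz \<and> ev f = ev g \<and> fd f g \<le> N"

lemma lift: assumes "(step N)\<^sup>*\<^sup>* f g" "h \<in> Fz"
  shows "(step N)\<^sup>*\<^sup>* (\<lambda>a. f a + h a) (\<lambda>a. g a + h a)"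
  using assms(1)
proof (induction rule: rtranclp_induct)
  case base then show ?case by simp
next
  case (step y z)
  have "step N (\<lambda>a. y a + h a) (\<lambda>a. z a + h a)"
    using step.hyps(2) assms(2) unfolding step_def by (simp add: Fz_add ev_add fd_add)
  with step.IH show ?case by (meson rtranclp.rtrancl_into_rtrancl)
qed

lemma chain_list: assumes "(step N)\<^sup>*\<^sup>* f g" "f \<in> Fz"
  shows "\<exists>xs. xs \<noteq> [] \<and> hd xs = f \<and> last xs = g \<and>
              (\<forall>x\<in>set xs. x \<in> Fz \<and> ev x = ev f) \<and>
              (\<forall>j. Suc j < length xs \<longrightarrow> fd (xs ! j) (xs ! Suc j) \<le> N)"
  using assms
proof (induction rule: converse_rtranclp_induct)
  case base
  show ?case by (rule exI[of _ "[g]"]) (use base in simp)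
next
  case (step y z)
  have zF: "z \<in> Fz" and yz: "ev y = ev z" and dyz: "fd y z \<le> N" using step.hyps(1) by (auto simp: step_def)
  obtain xs where xs: "xs \<noteq> []" "hd xs = z" "last xs = g" "\<forall>x\<in>set xs. x \<in> Fz \<and> ev x = ev z"
    "\<forall>j. Suc j < length xs \<longrightarrow> fd (xs ! j) (xs ! Suc j) \<le> N" using step.IH[OF zF] by blast
  show ?case
  proof (rule exI[of _ "y # xs"], intro conjI)
    show "y # xs \<noteq> []" by simp
    show "hd (y # xs) = y" by simp
    show "last (y # xs) = g" using xs by simp
    show "\<forall>x\<in>set (y # xs). x \<in> Fz \<and> ev x = ev y" using xs(4) step.prems yz by auto
    show "\<forall>j. Suc j < length (y # xs) \<longrightarrow> fd ((y # xs) ! j) ((y # xs) ! Suc j) \<le> N"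
    proof (intro allI impI)
      fix j assume j: "Suc j < length (y # xs)"
      show "fd ((y # xs) ! j) ((y # xs) ! Suc j) \<le> N"
      proof (cases j)
        case 0 then show ?thesis using dyz xs(1,2) by (simp add: hd_conv_nth)
      next
        case (Suc i) then show ?thesis using xs(5) j by simp
      qed
    qed
  qed
qed

abbreviation "mm \<equiv> Min (len ` A)"
abbreviation "NN \<equiv> (2 * dav + 2) div mm"

lemma mm_le: "a \<in> A \<Longrightarrow> mm \<le> len a"
  using finA by simp

lemma big_len: assumes "h \<in> Fz" "NN < flen h" shows "2 * dav + 2 < len (ev h)"
proof -
  have "flen h \<noteq> 0" using assms(2) by simp
  then obtain a where "a \<in> A" "h a \<noteq> 0" unfolding flen_def by (meson sum.neutral)
  then have Ane: "A \<noteq> {}" by blast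
  have "mm \<in> len ` A" using finA Ane by simp
  then obtain b where bA: "b \<in> A" and mb: "mm = len b" by blast
  have mpos: "0 < mm" using mb len_pos atom_supp[OF bA] atomD[OF bA] by simp
  let ?q = "2 * dav + 2"
  have "?q < mm * (?q div mm + 1)"
  proof -
    have e: "?q div mm * mm + ?q mod mm = ?q" by (rule div_mult_mod_eq)
    have l: "?q mod mm < mm" using mpos by (rule mod_less_divisor)
    have "mm * (?q div mm + 1) = ?q div mm * mm + mm" by (simp add: algebra_simps)
    then show ?thesis using e l by linarith
  qed
  also have "\<dots> \<le> mm * flen h" using assms(2) by (intro mult_le_mono2) simp
  also have "\<dots> \<le> len (ev h)" using flen_len mm_le by blast
  finally show ?thesis .
qed

lemma main:
  "len x = n \<Longrightarrow> f \<in> Fz \<Longrightarrow> g \<in> Fz \<Longrightarrow> ev f = x \<Longrightarrow> ev g = x \<Longrightarrow> (step NN)\<^sup>*\<^sup>* f g"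
proof (induction n arbitrary: x f g rule: less_induct)
  case (less n)
  have xH: "x \<in> H" using ev_H less.prems by blast
  have share: "(step NN)\<^sup>*\<^sup>* f' g'"
    if f'F: "f' \<in> Fz" and g'F: "g' \<in> Fz" and ef: "ev f' = x" and eg: "ev g' = x"
      and fc: "0 < f' c" and gc: "0 < g' c" for f' g' c
  proof -
    have cA: "c \<in> A" using Fz_A f'F fc by blast
    obtain f1 where f1: "f1 \<in> Fz" "f' = (\<lambda>a. f1 a + dl c a)" using decomp[OF f'F fc] by blast
    obtain g1 where g1: "g1 \<in> Fz" "g' = (\<lambda>a. g1 a + dl c a)" using decomp[OF g'F gc] by blast
    have xf: "x = (\<lambda>k. ev f1 k + c k)" using ef f1(2) ev_add ev_dl[OF cA] by simp
    have xg: "x = (\<lambda>k. ev g1 k + c k)" using eg g1(2) ev_add ev_dl[OF cA] by simp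
    have same: "ev g1 = ev f1"
    proof
      fix k show "ev g1 k = ev f1 k" using fun_cong[OF xf, of k] fun_cong[OF xg, of k] by simp
    qed
    have "0 < len c" using len_pos atom_supp[OF cA] atomD[OF cA] by simp
    then have "len (ev f1) < n" using less.prems(1) xf len_add by simp
    then have "(step NN)\<^sup>*\<^sup>* f1 g1" using less.IH f1(1) g1(1) same by blast
    then have "(step NN)\<^sup>*\<^sup>* (\<lambda>a. f1 a + dl c a) (\<lambda>a. g1 a + dl c a)" using lift Fz_dl[OF cA] by blast
    then show ?thesis using f1(2) g1(2) by simp
  qed
  have path: "(compat x)\<^sup>*\<^sup>* a b \<Longrightarrow> \<forall>f' g'. f' \<in> Fz \<longrightarrow> g' \<in> Fz \<longrightarrow> ev f' = x \<longrightarrow> ev g' = x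
      \<longrightarrow> 0 < f' a \<longrightarrow> 0 < g' b \<longrightarrow> (step NN)\<^sup>*\<^sup>* f' g'" for a b
  proof (induction rule: converse_rtranclp_induct)
    case base
    then show ?case using share by blast
  next
    case (step a a')
    have aA: "a \<in> A" and a'A: "a' \<in> A" and le: "\<forall>k. a k + a' k \<le> x k"
      using step.hyps(1) by (auto simp: compat_def)
    have sH: "(\<lambda>k. a k + a' k) \<in> H" using H_add atomD aA a'A by blast
    have rH: "(\<lambda>k. x k - (a k + a' k)) \<in> H" using H_sub[OF xH sH] le by simp
    obtain F where F: "F \<in> Fz" "ev F = (\<lambda>k. x k - (a k + a' k))" using fact_exists[OF rH] by blast
    define d where "d = (\<lambda>t. (\<lambda>s. F s + dl a s) t + dl a' t)"
    have dF: "d \<in> Fz" unfolding d_def using F(1) Fz_dl aA a'A Fz_add by blast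
    have "ev d = (\<lambda>k. (x k - (a k + a' k)) + a k + a' k)"
      unfolding d_def ev_add ev_dl[OF aA] ev_dl[OF a'A] F(2) by simp
    also have "\<dots> = x"
    proof (rule ext)
      fix k show "(x k - (a k + a' k)) + a k + a' k = x k" using spec[OF le, of k] by linarith
    qed
    finally have de: "ev d = x" .
    have da: "0 < d a" and da': "0 < d a'" by (simp_all add: d_def dl_def)
    show ?case
    proof (intro allI impI)
      fix f' g' assume h: "f' \<in> Fz" "g' \<in> Fz" "ev f' = x" "ev g' = x" "0 < f' a" "0 < g' b"
      have "(step NN)\<^sup>*\<^sup>* f' d" using share[OF h(1) dF h(3) de h(5) da] .
      moreover have "(step NN)\<^sup>*\<^sup>* d g'" using step.IH dF h(2) de h(4) da' h(6) by blast
      ultimately show "(step NN)\<^sup>*\<^sup>* f' g'" by (rule rtranclp_trans)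
    qed
  qed
  show ?case
  proof (cases "flen f \<le> NN \<and> flen g \<le> NN")
    case True
    have "fd f g \<le> NN" using fd_le[of f g] True by (meson le_trans max.boundedI)
    then have "step NN f g" using less.prems unfolding step_def by simp
    then show ?thesis by simp
  next
    case False
    then have "2 * dav + 2 < len x" using big_len less.prems by (metis not_le)
    then have lx: "0 < len x" by simp
    obtain a where fa: "0 < f a" using ev_nz less.prems lx by blast
    have "0 < len (ev g)" using less.prems(5) lx by simp
    then obtain b where gb: "0 < g b" using ev_nz[OF less.prems(3)] by blast
    have aA: "a \<in> A" using Fz_A less.prems fa by blast
    have bA: "b \<in> A" using Fz_A less.prems gb by blast
    have ax: "\<forall>k. a k \<le> x k" using atom_le_ev less.prems fa by blast
    have bx: "\<forall>k. b k \<le> x k" using atom_le_ev[OF less.prems(3) gb] less.prems(5) by simp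
    have "(compat x)\<^sup>*\<^sup>* a b"
      using connect[OF xH \<open>2 * dav + 2 < len x\<close>] aA bA ax bx by blast
    then show ?thesis using path less.prems fa gb by blast
  qed
qed

lemma cat_bound: "catenary_bound G G0 NN"
  unfolding catenary_bound_def
proof (intro ballI impI)
  fix \<beta> \<gamma> assume b: "\<beta> \<in> Fz" and c: "\<gamma> \<in> Fz" and e: "ev \<beta> = ev \<gamma>"
  have "(step NN)\<^sup>*\<^sup>* \<beta> \<gamma>" using main[OF refl b c refl e[symmetric]] .
  then show "\<exists>xs. xs \<noteq> [] \<and> hd xs = \<beta> \<and> last xs = \<gamma> \<and>
              (\<forall>x\<in>set xs. x \<in> Fz \<and> ev x = ev \<beta>) \<and>
              (\<forall>j. Suc j < length xs \<longrightarrow> fd (xs ! j) (xs ! Suc j) \<le> NN)"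
    using chain_list b by blast
qed

lemma final: "real (catenary_degree G G0) \<le> (2 * real dav + 2) / real mm"
proof -
  have "catenary_degree G G0 \<le> NN" unfolding catenary_degree_def by (rule Least_le[of "catenary_bound G G0", OF cat_bound])
  then have "real (catenary_degree G G0) \<le> real NN" by simp
  also have "\<dots> \<le> (2 * real dav + 2) / real mm"
  proof (cases "mm = 0")
    case True then show ?thesis by simp
  next
    case False
    have "real mm * real NN \<le> real (2 * dav + 2)"
      by (metis of_nat_le_iff of_nat_mult times_div_less_eq_dividend)
    then show ?thesis using False by (simp add: field_simps)
  qed
  finally show ?thesis .
qed

end

theorem corollary6p5:
  fixes G :: "('a, 'b) monoid_scheme" and G0 :: "'a set"
  assumes "comm_group G" and "finite (carrier G)" and "G0 \<subseteq> carrier G"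
  shows "real (catenary_degree G G0)
           \<le> (2 * real (davenport G G0) + 2) / real (Min (seq_len G0 ` atoms G G0))"
proof -
  interpret bctx G G0 by (rule bctx.intro[OF assms])
  show ?thesis by (rule final)
qed

end
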